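(* Let $n\ge1$, let $\Omega$ be the set of all Borel probability measures on $[0,1]$, let $D(x_0,\dots,x_n;p)=\sum_{k=0}^n\binom{n}{k}p^k(1-p)^{n-k}|p-x_k|$, and for $\sigma_0,\dots,\sigma_n,\mu\in\Omega$ put $E(\sigma_0,\dots,\sigma_n;\mu)=\int\cdots\int D(x_0,\dots,x_n;p)\,d\sigma_0(x_0)\cdots d\sigma_n(x_n)\,d\mu(p)$. Then $$\min_{\sigma_0,\dots,\sigma_n\in\Omega}\max_{\mu\in\Omega}E(\sigma_0,\dots,\sigma_n;\mu)=\min_{a_0,\dots,a_n\in[0,1]}\max_{p\in[0,1]}D(a_0,\dots,a_n;p)=\min_{a_0,\dots,a_n\in[0,1]}\|D(a_0,\dots,a_n;\cdot)\|_\infty.$$ *)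

theory Defs
  imports "HOL-Probability.Probability"
begin

definition D :: "nat \<Rightarrow> (nat \<Rightarrow> real) \<Rightarrow> real \<Rightarrow> real" where
  "D n x p = (\<Sum>k\<le>n. real (n choose k) * p ^ k * (1 - p) ^ (n - k) * \<bar>p - x k\<bar>)"

definition Omega :: "real measure set" where
  "Omega = {M. prob_space M \<and> sets M = sets (restrict_space borel {0..1})}"

definition E :: "nat \<Rightarrow> (nat \<Rightarrow> real measure) \<Rightarrow> real measure \<Rightarrow> real" where
  "E n \<sigma> \<mu> = (\<integral>p. (\<integral>x. D n x p \<partial>(PiM {..n} \<sigma>)) \<partial>\<mu>)"

definition is_max_of :: "real set \<Rightarrow> real \<Rightarrow> bool" where
  "is_max_of S v \<longleftrightarrow> v \<in> S \<and> (\<forall>y\<in>S. y \<le> v)"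

definition is_min_of :: "real set \<Rightarrow> real \<Rightarrow> bool" where
  "is_min_of S v \<longleftrightarrow> v \<in> S \<and> (\<forall>y\<in>S. v \<le> y)"

definition minmax_val :: "'a set \<Rightarrow> 'b set \<Rightarrow> ('a \<Rightarrow> 'b \<Rightarrow> real) \<Rightarrow> real \<Rightarrow> bool" where
  "minmax_val X Y f V \<longleftrightarrow>
     (\<forall>x\<in>X. \<exists>m. is_max_of (f x ` Y) m) \<and>
     is_min_of {m. \<exists>x\<in>X. is_max_of (f x ` Y) m} V"

end

theory Submission
  imports Defs
begin

abbreviation "B01 \<equiv> restrict_space borel {0..1::real}"

lemma Omega_facts:
  assumes "M \<in> Omega"
  shows "prob_space M" "sets M = sets B01" "space M = {0..1}"
proof -
  have *: "prob_space M \<and> sets M = sets B01" using assms by (simp add: Omega_def)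
  then show "prob_space M" "sets M = sets B01" by simp_all
  have "space M = space B01" using * by (intro sets_eq_imp_space_eq) simp
  then show "space M = {0..1}" by (simp add: space_restrict_space)
qed

lemma Omega_meas:
  assumes "M \<in> Omega" "f \<in> borel_measurable B01"
  shows "f \<in> borel_measurable M"
proof -
  have eq: "borel_measurable M = borel_measurable B01"
    by (rule measurable_cong_sets) (simp_all add: Omega_facts[OF assms(1)])
  show ?thesis by (subst eq) (rule assms(2))
qed

lemma Omega_int:
  assumes "M \<in> Omega"
  shows "integrable M (\<lambda>x. \<bar>p - x\<bar>)" "integrable M (\<lambda>x. x)"
proof -
  interpret prob_space M using Omega_facts[OF assms] by simp
  have m1: "(\<lambda>x. \<bar>p - x\<bar>) \<in> borel_measurable M"
    by (rule Omega_meas[OF assms], rule measurable_restrict_space1) simp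
  have m2: "(\<lambda>x::real. x) \<in> borel_measurable M"
    by (rule Omega_meas[OF assms], rule measurable_restrict_space1) simp
  have b1: "AE x in M. norm \<bar>p - x\<bar> \<le> \<bar>p\<bar>+1"
    by (rule AE_I2) (simp add: Omega_facts[OF assms], arith)
  have b2: "AE x in M. norm x \<le> 1"
    by (rule AE_I2) (simp add: Omega_facts[OF assms])
  show "integrable M (\<lambda>x. \<bar>p - x\<bar>)" by (rule integrable_const_bound[OF b1 m1])
  show "integrable M (\<lambda>x. x)" by (rule integrable_const_bound[OF b2 m2])
qed

definition h :: "real measure \<Rightarrow> real \<Rightarrow> real" where
  "h M p = (\<integral>x. \<bar>p - x\<bar> \<partial>M)"

lemma h_nonneg: "h M p \<ge> 0" unfolding h_def by simp

lemma h_lip: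
  assumes "M \<in> Omega"
  shows "\<bar>h M p - h M q\<bar> \<le> \<bar>p - q\<bar>"
proof -
  interpret prob_space M using Omega_facts[OF assms] by simp
  have "h M p - h M q = (\<integral>x. \<bar>p - x\<bar> - \<bar>q - x\<bar> \<partial>M)"
    unfolding h_def using Omega_int[OF assms] by simp
  also have "\<bar>\<dots>\<bar> \<le> (\<integral>x. \<bar>\<bar>p - x\<bar> - \<bar>q - x\<bar>\<bar> \<partial>M)"
    by (rule integral_abs_bound)
  also have "\<dots> \<le> (\<integral>x. \<bar>p - q\<bar> \<partial>M)"
  proof (rule integral_mono)
    show "integrable M (\<lambda>x. \<bar>\<bar>p - x\<bar> - \<bar>q - x\<bar>\<bar>)"
      using Omega_int[OF assms] by (intro integrable_abs integrable_diff) auto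
    show "integrable M (\<lambda>x. \<bar>p - q\<bar>)" by simp
    show "\<And>x. x \<in> space M \<Longrightarrow> \<bar>\<bar>p - x\<bar> - \<bar>q - x\<bar>\<bar> \<le> \<bar>p - q\<bar>" by arith
  qed
  also have "\<dots> = \<bar>p - q\<bar>" by (simp add: prob_space)
  finally show ?thesis .
qed

lemma h_mean:
  assumes "M \<in> Omega"
  shows "h M p \<ge> \<bar>p - (\<integral>x. x \<partial>M)\<bar>" "(\<integral>x. x \<partial>M) \<in> {0..1}"
proof -
  interpret prob_space M using Omega_facts[OF assms] by simp
  have "p - (\<integral>x. x \<partial>M) = (\<integral>x. p - x \<partial>M)"
    using Omega_int[OF assms] by (simp add: prob_space)
  also have "\<bar>\<dots>\<bar> \<le> h M p" unfolding h_def by (rule integral_abs_bound)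
  finally show "h M p \<ge> \<bar>p - (\<integral>x. x \<partial>M)\<bar>" .
  have "(\<integral>x. x \<partial>M) \<ge> 0"
    by (rule integral_nonneg_AE, rule AE_I2) (simp add: Omega_facts[OF assms])
  moreover have "(\<integral>x. x \<partial>M) \<le> 1"
    by (rule integral_le_const[OF Omega_int(2)[OF assms]], rule AE_I2) (simp add: Omega_facts[OF assms])
  ultimately show "(\<integral>x. x \<partial>M) \<in> {0..1}" by simp
qed

lemma h_return:
  assumes "a \<in> {0..1}"
  shows "h (return B01 a) p = \<bar>p - a\<bar>"
  unfolding h_def using assms
  by (subst integral_return) (auto intro!: measurable_restrict_space1)

lemma return_Omega: "a \<in> {0..1} \<Longrightarrow> return B01 a \<in> Omega"
  unfolding Omega_def by (auto intro!: prob_space_return)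

definition F :: "nat \<Rightarrow> (nat \<Rightarrow> real measure) \<Rightarrow> real \<Rightarrow> real" where
  "F n \<sigma> p = (\<Sum>k\<le>n. real (n choose k) * p ^ k * (1 - p) ^ (n - k) * h (\<sigma> k) p)"

lemma comp_int:
  assumes "\<sigma> \<in> {..n} \<rightarrow>\<^sub>E Omega" "k \<le> n"
  shows "integrable (PiM {..n} \<sigma>) (\<lambda>x. \<bar>p - x k\<bar>)"
        "(\<integral>x. \<bar>p - x k\<bar> \<partial>PiM {..n} \<sigma>) = h (\<sigma> k) p"
proof -
  have Om: "\<sigma> k \<in> Omega" using assms by auto
  have ps: "\<And>i. i \<in> {..n} \<Longrightarrow> prob_space (\<sigma> i)" using assms Omega_facts(1) by auto
  have d: "distr (PiM {..n} \<sigma>) (\<sigma> k) (\<lambda>x. x k) = \<sigma> k"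
    by (rule distr_PiM_component[OF ps]) (use assms in auto)
  have m1: "(\<lambda>x. x k) \<in> measurable (PiM {..n} \<sigma>) (\<sigma> k)"
    by (rule measurable_component_singleton) (use assms in auto)
  have m2: "(\<lambda>y. \<bar>p - y\<bar>) \<in> borel_measurable (\<sigma> k)"
    by (rule Omega_meas[OF Om], rule measurable_restrict_space1) simp
  show "integrable (PiM {..n} \<sigma>) (\<lambda>x. \<bar>p - x k\<bar>)"
    using integrable_distr_eq[OF m1 m2] Omega_int(1)[OF Om, of p] d by simp
  show "(\<integral>x. \<bar>p - x k\<bar> \<partial>PiM {..n} \<sigma>) = h (\<sigma> k) p"
    using integral_distr[OF m1 m2] d unfolding h_def by simp
qed

lemma E_inner:
  assumes "\<sigma> \<in> {..n} \<rightarrow>\<^sub>E Omega"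
  shows "(\<integral>x. D n x p \<partial>PiM {..n} \<sigma>) = F n \<sigma> p"
proof -
  let ?c = "\<lambda>k. real (n choose k) * p ^ k * (1 - p) ^ (n - k)"
  have "(\<integral>x. D n x p \<partial>PiM {..n} \<sigma>) = (\<integral>x. (\<Sum>k\<le>n. ?c k * \<bar>p - x k\<bar>) \<partial>PiM {..n} \<sigma>)"
    unfolding D_def ..
  also have "\<dots> = (\<Sum>k\<le>n. (\<integral>x. ?c k * \<bar>p - x k\<bar> \<partial>PiM {..n} \<sigma>))"
    by (rule Bochner_Integration.integral_sum)
       (auto intro!: integrable_mult_right comp_int(1)[OF assms])
  also have "\<dots> = (\<Sum>k\<le>n. ?c k * h (\<sigma> k) p)"
    by (intro sum.cong refl) (simp add: comp_int(2)[OF assms])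
  finally show ?thesis unfolding F_def .
qed

lemma E_eq:
  assumes "\<sigma> \<in> {..n} \<rightarrow>\<^sub>E Omega"
  shows "E n \<sigma> \<mu> = (\<integral>p. F n \<sigma> p \<partial>\<mu>)"
  unfolding E_def E_inner[OF assms] ..

lemma h_cont:
  assumes "M \<in> Omega"
  shows "continuous_on S (h M)"
proof (rule lipschitz_on_continuous_on)
  show "1-lipschitz_on S (h M)"
    by (rule lipschitz_onI) (auto simp: dist_real_def h_lip[OF assms])
qed

lemma F_cont:
  assumes "\<sigma> \<in> {..n} \<rightarrow>\<^sub>E Omega"
  shows "continuous_on S (F n \<sigma>)"
  unfolding F_def using assms
  by (intro continuous_intros h_cont) auto

lemma D_nonneg: "p \<in> {0..1} \<Longrightarrow> D n a p \<ge> 0"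
  unfolding D_def by (intro sum_nonneg) auto

lemma F_nonneg: "p \<in> {0..1} \<Longrightarrow> F n \<sigma> p \<ge> 0"
  unfolding F_def by (intro sum_nonneg) (auto simp: h_nonneg)

lemma F_return:
  assumes "a \<in> {..n} \<rightarrow>\<^sub>E {0..1}"
  shows "F n (\<lambda>k\<in>{..n}. return B01 (a k)) p = D n a p"
  unfolding F_def D_def
proof (intro sum.cong refl)
  fix k assume "k \<in> {..n}"
  then have "a k \<in> {0..1}" using assms by auto
  then show "real (n choose k) * p ^ k * (1 - p) ^ (n - k) * h ((\<lambda>k\<in>{..n}. return B01 (a k)) k) p =
    real (n choose k) * p ^ k * (1 - p) ^ (n - k) * \<bar>p - (a k)\<bar>"
    using \<open>k \<in> {..n}\<close> by (simp add: h_return)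
qed

lemma F_ge_D:
  assumes "\<sigma> \<in> {..n} \<rightarrow>\<^sub>E Omega" "p \<in> {0..1}"
  shows "D n (\<lambda>k\<in>{..n}. \<integral>x. x \<partial>\<sigma> k) p \<le> F n \<sigma> p"
  unfolding F_def D_def
proof (intro sum_mono)
  fix k assume k: "k \<in> {..n}"
  then have "\<sigma> k \<in> Omega" using assms by auto
  then show "real (n choose k) * p ^ k * (1 - p) ^ (n - k) * \<bar>p - (\<lambda>k\<in>{..n}. \<integral>x. x \<partial>\<sigma> k) k\<bar>
     \<le> real (n choose k) * p ^ k * (1 - p) ^ (n - k) * h (\<sigma> k) p"
    using k assms(2) by (intro mult_left_mono) (auto simp: h_mean(1))
qed

lemma mean_in:
  assumes "\<sigma> \<in> {..n} \<rightarrow>\<^sub>E Omega"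
  shows "(\<lambda>k\<in>{..n}. \<integral>x. x \<partial>\<sigma> k) \<in> {..n} \<rightarrow>\<^sub>E {0..1}"
proof -
  have "\<And>k. k \<le> n \<Longrightarrow> (\<integral>x. x \<partial>\<sigma> k) \<in> {0..1}"
    using assms by (intro h_mean(2)) auto
  then show ?thesis by auto
qed

lemma F_meas:
  assumes "\<sigma> \<in> {..n} \<rightarrow>\<^sub>E Omega"
  shows "F n \<sigma> \<in> borel_measurable B01"
  by (rule borel_measurable_continuous_on_restrict[OF F_cont[OF assms]])

lemma E_return:
  assumes "\<sigma> \<in> {..n} \<rightarrow>\<^sub>E Omega" "p \<in> {0..1}"
  shows "E n \<sigma> (return B01 p) = F n \<sigma> p"
proof -
  have "borel_measurable (return B01 p) = borel_measurable B01"
    by (rule measurable_cong_sets) simp_all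
  then show ?thesis unfolding E_eq[OF assms(1)] using assms F_meas[OF assms(1)]
    by (subst integral_return) auto
qed

lemma E_le:
  assumes "\<sigma> \<in> {..n} \<rightarrow>\<^sub>E Omega" "\<mu> \<in> Omega" "p \<in> {0..1}"
    "\<forall>q\<in>{0..1}. F n \<sigma> q \<le> F n \<sigma> p"
  shows "E n \<sigma> \<mu> \<le> F n \<sigma> p"
proof -
  interpret prob_space \<mu> using Omega_facts[OF assms(2)] by simp
  have meas: "F n \<sigma> \<in> borel_measurable \<mu>" by (rule Omega_meas[OF assms(2) F_meas[OF assms(1)]])
  have int: "integrable \<mu> (F n \<sigma>)"
    by (rule integrable_const_bound[where B="F n \<sigma> p"])
       (use assms meas F_nonneg in \<open>auto simp: Omega_facts[OF assms(2)] intro!: AE_I2\<close>)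
  show ?thesis unfolding E_eq[OF assms(1)]
    by (rule integral_le_const[OF int]) (use assms in \<open>auto simp: Omega_facts[OF assms(2)] intro!: AE_I2\<close>)
qed

lemma E_max:
  assumes "\<sigma> \<in> {..n} \<rightarrow>\<^sub>E Omega" "p \<in> {0..1}"
    "\<forall>q\<in>{0..1}. F n \<sigma> q \<le> F n \<sigma> p"
  shows "is_max_of (E n \<sigma> ` Omega) (F n \<sigma> p)"
  unfolding is_max_of_def
  using E_le[OF assms(1) _ assms(2,3)] E_return[OF assms(1,2), symmetric] return_Omega[OF assms(2)]
  by auto

lemma F_attains:
  assumes "\<sigma> \<in> {..n} \<rightarrow>\<^sub>E Omega"
  shows "\<exists>p\<in>{0..1}. \<forall>q\<in>{0..1}. F n \<sigma> q \<le> F n \<sigma> p"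
  using continuous_attains_sup[OF compact_Icc _ F_cont[OF assms]] by auto

lemma D_attains:
  shows "\<exists>p\<in>{0..1::real}. \<forall>q\<in>{0..1}. D n a q \<le> D n a p"
proof -
  have "continuous_on {0..1} (D n a)" unfolding D_def by (intro continuous_intros)
  then show ?thesis using continuous_attains_sup[of "{0..1::real}" "D n a"] by auto
qed

lemma D_cmap:
  "continuous_map (product_topology (\<lambda>_. euclideanreal) {..n}) euclideanreal (\<lambda>a. D n a p)"
  unfolding D_def real_norm_def[symmetric]
proof (rule continuous_map_sum)
  fix k assume k: "k \<in> {..n}"
  have "continuous_map (product_topology (\<lambda>_. euclideanreal) {..n}) euclideanreal (\<lambda>a. a k)"
    using continuous_map_product_projection[OF k, of "\<lambda>_. euclideanreal"] by simp
  then show "continuous_map (product_topology (\<lambda>_. euclideanreal) {..n}) euclideanreal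
     (\<lambda>a. real (n choose k) * p ^ k * (1 - p) ^ (n - k) * norm (p - a k))"
    by (intro continuous_map_real_mult continuous_map_norm continuous_map_diff) simp_all
qed simp

lemma min_exists:
  fixes G :: "(nat \<Rightarrow> real) \<Rightarrow> real"
  assumes G: "\<And>a. a \<in> {..n} \<rightarrow>\<^sub>E {0..1} \<Longrightarrow>
     \<exists>p\<in>{0..1}. G a = D n a p \<and> (\<forall>q\<in>{0..1}. D n a q \<le> G a)"
  shows "\<exists>a0\<in>{..n} \<rightarrow>\<^sub>E {0..1}. \<forall>a\<in>{..n} \<rightarrow>\<^sub>E {0..1}. G a0 \<le> G a"
proof (rule ccontr)
  define A where "A = ({..n} \<rightarrow>\<^sub>E {0..1::real})"
  assume "\<not> ?thesis"
  then have nm: "\<And>a. a \<in> A \<Longrightarrow> \<exists>b\<in>A. G b < G a" unfolding A_def by (auto simp: not_le)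
  define X where "X = product_topology (\<lambda>_. euclideanreal) {..n}"
  define m where "m = Inf (G ` A)"
  have zA: "(\<lambda>k\<in>{..n}. 0) \<in> A" unfolding A_def by auto
  have Gnn: "\<And>a. a \<in> A \<Longrightarrow> G a \<ge> 0"
  proof -
    fix a assume "a \<in> A"
    then obtain p where "p \<in> {0..1}" "G a = D n a p" using G unfolding A_def by blast
    then show "G a \<ge> 0" using D_nonneg by simp
  qed
  have bdd: "bdd_below (G ` A)" by (rule bdd_belowI2[where m=0]) (rule Gnn)
  have gt: "\<And>a. a \<in> A \<Longrightarrow> m < G a"
  proof -
    fix a assume a: "a \<in> A"
    then obtain b where b: "b \<in> A" "G b < G a" using nm by blast
    have "m \<le> G b" unfolding m_def using b bdd by (auto intro: cInf_lower)
    then show "m < G a" using b by simp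
  qed
  have cpt: "compactin X A" unfolding X_def A_def
    by (simp add: compactin_PiE)
  define U where "U = (\<lambda>(p::real,c::real). {a \<in> topspace X. c < D n a p})"
  have opn: "\<forall>B \<in> U ` ({0..1} \<times> {m<..}). openin X B"
  proof
    fix B assume "B \<in> U ` ({0..1} \<times> {m<..})"
    then obtain p c where "B = {a \<in> topspace X. D n a p \<in> {c<..}}" unfolding U_def by auto
    then show "openin X B" unfolding X_def
      by (simp only:) (rule openin_continuous_map_preimage[OF D_cmap], simp)
  qed
  have AX: "A \<subseteq> topspace X" using cpt by (simp add: compactin_subset_topspace)
  have cov: "A \<subseteq> \<Union>(U ` ({0..1} \<times> {m<..}))"
  proof
    fix a assume a: "a \<in> A"
    then obtain p where p: "p \<in> {0..1}" "G a = D n a p" using G unfolding A_def by blast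
    have "m < (m + G a)/2" "(m + G a)/2 < D n a p" using gt[OF a] p by auto
    then have "a \<in> U (p, (m + G a)/2)" using a AX unfolding U_def by auto
    then show "a \<in> \<Union>(U ` ({0..1} \<times> {m<..}))" using p \<open>m < (m + G a)/2\<close> by blast
  qed
  obtain FF where FF: "finite FF" "FF \<subseteq> U ` ({0..1} \<times> {m<..})" "A \<subseteq> \<Union>FF"
  proof -
    have "\<forall>\<U>. (\<forall>B\<in>\<U>. openin X B) \<and> A \<subseteq> \<Union>\<U> \<longrightarrow> (\<exists>F. finite F \<and> F \<subseteq> \<U> \<and> A \<subseteq> \<Union>F)"
      using cpt unfolding compactin_def by blast
    then have "\<exists>F. finite F \<and> F \<subseteq> U ` ({0..1} \<times> {m<..}) \<and> A \<subseteq> \<Union>F"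
      using opn cov by blast
    then show ?thesis using that by blast
  qed
  obtain J where J: "J \<subseteq> {0..1} \<times> {m<..}" "finite J" "FF = U ` J"
    using finite_subset_image[OF FF(1,2)] by blast
  have Jne: "J \<noteq> {}" using FF(3) zA J(3) by auto
  define c0 where "c0 = Min (snd ` J)"
  have c0m: "m < c0" unfolding c0_def using J Jne by (auto simp: Min_gr_iff)
  have "\<forall>a\<in>A. c0 \<le> G a"
  proof
    fix a assume a: "a \<in> A"
    then obtain pc where pc: "pc \<in> J" "a \<in> U pc" using FF(3) J(3) by auto
    obtain p c where pcd: "pc = (p, c)" by (cases pc)
    have "p \<in> {0..1}" using pc J pcd by auto
    then have "D n a p \<le> G a" using G[of a] a unfolding A_def by auto
    moreover have "c < D n a p" using pc pcd unfolding U_def by auto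
    moreover have "c0 \<le> c" proof -
      have "c \<in> snd ` J" using pc pcd by (metis image_eqI snd_conv)
      then show ?thesis unfolding c0_def using J(2) by simp
    qed
    ultimately show "c0 \<le> G a" by simp
  qed
  then have "c0 \<le> m" unfolding m_def by - (rule cInf_greatest, use zA in auto)
  then show False using c0m by simp
qed

lemma max_unique: "is_max_of S m \<Longrightarrow> is_max_of S m' \<Longrightarrow> m = m'"
  unfolding is_max_of_def by (meson antisym)

theorem theorem4p2:
  fixes n :: nat
  assumes "n \<ge> 1"
  shows "\<exists>V.
    minmax_val ({..n} \<rightarrow>\<^sub>E Omega) Omega (E n) V \<and>
    minmax_val ({..n} \<rightarrow>\<^sub>E {0..1}) {0..1} (D n) V \<and>
    is_min_of ((\<lambda>a. SUP p\<in>{0..1}. \<bar>D n a p\<bar>) ` ({..n} \<rightarrow>\<^sub>E {0..1})) V"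
proof -
  define A where "A = ({..n} \<rightarrow>\<^sub>E {0..1::real})"
  define pm where "pm a = (SOME p. p \<in> {0..1} \<and> (\<forall>q\<in>{0..1}. D n a q \<le> D n a p))" for a
  have pm: "pm a \<in> {0..1} \<and> (\<forall>q\<in>{0..1}. D n a q \<le> D n a (pm a))" for a
    unfolding pm_def using someI_ex[OF D_attains[unfolded Bex_def]] by blast
  define G where "G a = D n a (pm a)" for a
  have Gp: "\<exists>p\<in>{0..1}. G a = D n a p \<and> (\<forall>q\<in>{0..1}. D n a q \<le> G a)" for a
    using pm[of a] unfolding G_def by blast
  obtain a0 where a0: "a0 \<in> A" "\<forall>a\<in>A. G a0 \<le> G a"
    using min_exists[of n G, OF Gp] unfolding A_def by blast
  define V where "V = G a0"
  have Dmax: "is_max_of (D n a ` {0..1}) (G a)" for a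
    using pm[of a] unfolding is_max_of_def G_def by auto
  have c2: "minmax_val A {0..1} (D n) V"
    unfolding minmax_val_def
  proof (intro conjI ballI)
    show "\<exists>m. is_max_of (D n a ` {0..1}) m" for a using Dmax by blast
    show "is_min_of {m. \<exists>a\<in>A. is_max_of (D n a ` {0..1}) m} V"
      unfolding is_min_of_def
    proof (intro conjI ballI)
      show "V \<in> {m. \<exists>a\<in>A. is_max_of (D n a ` {0..1}) m}" using a0 Dmax unfolding V_def by blast
      fix y assume "y \<in> {m. \<exists>a\<in>A. is_max_of (D n a ` {0..1}) m}"
      then obtain a where "a \<in> A" "is_max_of (D n a ` {0..1}) y" by blast
      then have "y = G a" using max_unique Dmax by blast
      then show "V \<le> y" using a0 \<open>a \<in> A\<close> unfolding V_def by simp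
    qed
  qed
  have sup: "(SUP p\<in>{0..1}. \<bar>D n a p\<bar>) = G a" for a
  proof -
    have "(SUP p\<in>{0..1}. \<bar>D n a p\<bar>) = (SUP p\<in>{0..1}. D n a p)"
      by (rule SUP_cong) (auto simp: D_nonneg)
    also have "\<dots> = G a"
      using Dmax[of a] unfolding is_max_of_def by (intro cSup_eq_maximum) auto
    finally show ?thesis .
  qed
  have c3: "is_min_of ((\<lambda>a. SUP p\<in>{0..1}. \<bar>D n a p\<bar>) ` A) V"
    unfolding is_min_of_def sup V_def using a0 by auto
  define AO where "AO = ({..n} \<rightarrow>\<^sub>E Omega)"
  have c1: "minmax_val AO Omega (E n) V"
    unfolding minmax_val_def
  proof (intro conjI ballI)
    fix \<sigma> assume "\<sigma> \<in> AO"
    then have s: "\<sigma> \<in> {..n} \<rightarrow>\<^sub>E Omega" unfolding AO_def .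
    obtain p where "p \<in> {0..1}" "\<forall>q\<in>{0..1}. F n \<sigma> q \<le> F n \<sigma> p" using F_attains[OF s] by blast
    then show "\<exists>m. is_max_of (E n \<sigma> ` Omega) m" using E_max[OF s] by blast
  next
    show "is_min_of {m. \<exists>\<sigma>\<in>AO. is_max_of (E n \<sigma> ` Omega) m} V"
      unfolding is_min_of_def
    proof (intro conjI ballI)
      define \<sigma>0 where "\<sigma>0 = (\<lambda>k\<in>{..n}. return B01 (a0 k))"
      have s0: "\<sigma>0 \<in> {..n} \<rightarrow>\<^sub>E Omega"
        using a0(1) unfolding \<sigma>0_def A_def by (auto intro!: return_Omega)
      have Feq: "F n \<sigma>0 = D n a0" unfolding \<sigma>0_def
        using F_return a0(1) unfolding A_def by blast
      have "is_max_of (E n \<sigma>0 ` Omega) (F n \<sigma>0 (pm a0))"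
        by (rule E_max[OF s0]) (use pm[of a0] Feq in auto)
      then have "is_max_of (E n \<sigma>0 ` Omega) V" unfolding Feq V_def G_def .
      then show "V \<in> {m. \<exists>\<sigma>\<in>AO. is_max_of (E n \<sigma> ` Omega) m}"
        using s0 unfolding AO_def by blast
    next
      fix y assume "y \<in> {m. \<exists>\<sigma>\<in>AO. is_max_of (E n \<sigma> ` Omega) m}"
      then obtain \<sigma> where s: "\<sigma> \<in> {..n} \<rightarrow>\<^sub>E Omega" and ym: "is_max_of (E n \<sigma> ` Omega) y"
        unfolding AO_def by blast
      define a' where "a' = (\<lambda>k\<in>{..n}. \<integral>x. x \<partial>\<sigma> k)"
      have a'A: "a' \<in> A" unfolding a'_def A_def by (rule mean_in[OF s])
      have pa: "pm a' \<in> {0..1}" using pm by blast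
      have "V \<le> G a'" using a0 a'A unfolding V_def by simp
      also have "\<dots> \<le> F n \<sigma> (pm a')" unfolding G_def using F_ge_D[OF s pa] by (simp add: a'_def)
      also have "\<dots> = E n \<sigma> (return B01 (pm a'))" by (rule E_return[OF s pa, symmetric])
      also have "\<dots> \<le> y" using ym return_Omega[OF pa] unfolding is_max_of_def by blast
      finally show "V \<le> y" .
    qed
  qed
  show ?thesis using c1 c2 c3 unfolding AO_def A_def by blast
qed

end
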